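(* Let $G$ be a locally finite unweighted graph and $(x,y)\in E(G)$. Let $H$ be the subgraph of $G$ induced by $V_{(x,y)}=N_G(x)\cup N_G(y)\cup P_G(x,y)$. Then $\kappa_G(x,y)=\kappa_H(x,y)$. Moreover, if $H'$ denotes the graph obtained from $H$ by deleting all edges between $\Delta_G(x,y)$ and $P_G(x,y)$, then $\kappa_G(x,y)=\kappa_{H'}(x,y)$.
   Context: For a graph $K$ containing the edge $(x,y)$: $d_K$ is the shortest-path metric of $K$, $N_K(v)$ the neighbour set and $d_v$ the degree of $v$ in $K$, $m_v$ the uniform probability measure on $N_K(v)$, and $\kappa_K(x,y)=1-W_1^K(m_x,m_y)$, where $W_1^K(\mu,\nu)=\inf_{\pi}\sum_{u,w}\pi(u,w)d_K(u,w)$ is the transportation distance, the infimum being over couplings $\pi$ of $\mu$ and $\nu$. $\Delta_G(x,y)=N_G(x)\cap N_G(y)$, and $P_G(x,y)=\{v\in V(G): d_G(x,v)=d_G(y,v)=2\}$. *)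

theory Defs
  imports "HOL-Library.Extended_Nat" "HOL-Library.Extended_Real"
begin

definition simple_graph :: "'a set \<Rightarrow> ('a \<Rightarrow> 'a \<Rightarrow> bool) \<Rightarrow> bool" where
  "simple_graph V E \<longleftrightarrow> (\<forall>u v. E u v \<longrightarrow> u \<in> V \<and> v \<in> V) \<and>
     (\<forall>u v. E u v \<longrightarrow> E v u) \<and> (\<forall>u. \<not> E u u)"

definition nbrs :: "('a \<Rightarrow> 'a \<Rightarrow> bool) \<Rightarrow> 'a \<Rightarrow> 'a set" where
  "nbrs E v = {u. E v u}"

definition locally_finite :: "'a set \<Rightarrow> ('a \<Rightarrow> 'a \<Rightarrow> bool) \<Rightarrow> bool" where
  "locally_finite V E \<longleftrightarrow> (\<forall>v\<in>V. finite (nbrs E v))"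

text \<open>Shortest-path distance (infinite if there is no path).\<close>

definition walk_of_length :: "('a \<Rightarrow> 'a \<Rightarrow> bool) \<Rightarrow> nat \<Rightarrow> 'a \<Rightarrow> 'a \<Rightarrow> bool" where
  "walk_of_length E n u v \<longleftrightarrow>
     (\<exists>f. f 0 = u \<and> f n = v \<and> (\<forall>i<n. E (f i) (f (Suc i))))"

definition gdist :: "('a \<Rightarrow> 'a \<Rightarrow> bool) \<Rightarrow> 'a \<Rightarrow> 'a \<Rightarrow> enat" where
  "gdist E u v = (INF n \<in> {n. walk_of_length E n u v}. enat n)"

definition unif_nbr :: "('a \<Rightarrow> 'a \<Rightarrow> bool) \<Rightarrow> 'a \<Rightarrow> 'a \<Rightarrow> real" where
  "unif_nbr E v u = (if E v u then 1 / real (card (nbrs E v)) else 0)"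

text \<open>Couplings of finitely supported measures mu (support in A) and nu (support in B).
  Any coupling is supported in A x B, so this is the full set of couplings.\<close>

definition coupling :: "('a \<Rightarrow> real) \<Rightarrow> ('a \<Rightarrow> real) \<Rightarrow> 'a set \<Rightarrow> 'a set
    \<Rightarrow> ('a \<Rightarrow> 'a \<Rightarrow> real) \<Rightarrow> bool" where
  "coupling \<mu> \<nu> A B \<pi> \<longleftrightarrow> (\<forall>u w. 0 \<le> \<pi> u w) \<and>
     (\<forall>u w. \<pi> u w \<noteq> 0 \<longrightarrow> u \<in> A \<and> w \<in> B) \<and>
     (\<forall>u. (\<Sum>w\<in>B. \<pi> u w) = \<mu> u) \<and> (\<forall>w. (\<Sum>u\<in>A. \<pi> u w) = \<nu> w)"

definition transport_cost :: "('a \<Rightarrow> 'a \<Rightarrow> bool) \<Rightarrow> 'a set \<Rightarrow> 'a set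
    \<Rightarrow> ('a \<Rightarrow> 'a \<Rightarrow> real) \<Rightarrow> ereal" where
  "transport_cost E A B \<pi> = (\<Sum>u\<in>A. \<Sum>w\<in>B. ereal (\<pi> u w) * ereal_of_enat (gdist E u w))"

definition W1_nbr :: "('a \<Rightarrow> 'a \<Rightarrow> bool) \<Rightarrow> 'a \<Rightarrow> 'a \<Rightarrow> ereal" where
  "W1_nbr E x y = (INF \<pi> \<in> {\<pi>. coupling (unif_nbr E x) (unif_nbr E y) (nbrs E x) (nbrs E y) \<pi>}.
       transport_cost E (nbrs E x) (nbrs E y) \<pi>)"

definition ollivier_curv :: "('a \<Rightarrow> 'a \<Rightarrow> bool) \<Rightarrow> 'a \<Rightarrow> 'a \<Rightarrow> real" where
  "ollivier_curv E x y = 1 - real_of_ereal (W1_nbr E x y)"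

definition common_nbrs :: "('a \<Rightarrow> 'a \<Rightarrow> bool) \<Rightarrow> 'a \<Rightarrow> 'a \<Rightarrow> 'a set" where
  "common_nbrs E x y = nbrs E x \<inter> nbrs E y"

definition pent_set :: "'a set \<Rightarrow> ('a \<Rightarrow> 'a \<Rightarrow> bool) \<Rightarrow> 'a \<Rightarrow> 'a \<Rightarrow> 'a set" where
  "pent_set V E x y = {v \<in> V. gdist E x v = 2 \<and> gdist E y v = 2}"

definition induced :: "('a \<Rightarrow> 'a \<Rightarrow> bool) \<Rightarrow> 'a set \<Rightarrow> 'a \<Rightarrow> 'a \<Rightarrow> bool" where
  "induced E S u v \<longleftrightarrow> E u v \<and> u \<in> S \<and> v \<in> S"

end

theory Submission
  imports Defs
begin

lemma walk0: "walk_of_length F 0 u v \<longleftrightarrow> u = v"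
  unfolding walk_of_length_def by auto

lemma walk1: "walk_of_length F 1 u v \<longleftrightarrow> F u v"
  unfolding walk_of_length_def
proof
  assume "\<exists>f. f 0 = u \<and> f 1 = v \<and> (\<forall>i<1. F (f i) (f (Suc i)))"
  then show "F u v" by auto
next
  assume "F u v"
  then show "\<exists>f. f 0 = u \<and> f 1 = v \<and> (\<forall>i<1. F (f i) (f (Suc i)))"
    by (intro exI[of _ "\<lambda>i. if i = 0 then u else v"]) auto
qed

lemma walk2: "walk_of_length F 2 u v \<longleftrightarrow> (\<exists>z. F u z \<and> F z v)"
  unfolding walk_of_length_def
proof
  assume "\<exists>f. f 0 = u \<and> f 2 = v \<and> (\<forall>i<2. F (f i) (f (Suc i)))"
  then obtain f where "f 0 = u" "f 2 = v" "\<forall>i<2. F (f i) (f (Suc i))" by blast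
  then have "F u (f 1)" "F (f 1) v" using numeral_2_eq_2 by (metis One_nat_def lessI less_2_cases_iff)+
  then show "\<exists>z. F u z \<and> F z v" by blast
next
  assume "\<exists>z. F u z \<and> F z v"
  then obtain z where "F u z" "F z v" by blast
  then show "\<exists>f. f 0 = u \<and> f 2 = v \<and> (\<forall>i<2. F (f i) (f (Suc i)))"
    by (intro exI[of _ "\<lambda>i. if i = 0 then u else if i = 1 then z else v"])
       (auto simp: less_2_cases_iff)
qed

lemma walk3: "F a b \<Longrightarrow> F b c \<Longrightarrow> F c d \<Longrightarrow> walk_of_length F 3 a d"
  unfolding walk_of_length_def
  apply (rule exI[of _ "\<lambda>i. if i = 0 then a else if i = 1 then b else if i = 2 then c else d"])
  apply (auto simp: numeral_3_eq_3 less_Suc_eq)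
  done

lemma walk_mono: "walk_of_length F n u v \<Longrightarrow> (\<And>a b. F a b \<Longrightarrow> E a b) \<Longrightarrow> walk_of_length E n u v"
  unfolding walk_of_length_def by blast

lemma gdist_Least: "walk_of_length F n u v \<Longrightarrow> gdist F u v = enat (LEAST n. walk_of_length F n u v)"
  unfolding gdist_def
proof (rule antisym)
  assume w: "walk_of_length F n u v"
  show "(INF n \<in> {n. walk_of_length F n u v}. enat n) \<le> enat (LEAST n. walk_of_length F n u v)"
    by (rule INF_lower) (use LeastI[of "\<lambda>n. walk_of_length F n u v", OF w] in auto)
  show "enat (LEAST n. walk_of_length F n u v) \<le> (INF n \<in> {n. walk_of_length F n u v}. enat n)"
    by (rule INF_greatest) (auto intro: Least_le)
qed

lemma gdist_val: "walk_of_length F n u v \<Longrightarrow> (\<And>m. m<n \<Longrightarrow> \<not> walk_of_length F m u v) \<Longrightarrow> gdist F u v = enat n"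
  apply (subst gdist_Least, assumption)
  apply (subst Least_equality[of _ n])
    apply (auto simp: not_less[symmetric])
  done

lemma least_eq: "P (3::nat) \<Longrightarrow> (\<And>k. k \<le> 3 \<Longrightarrow> P k = Q k) \<Longrightarrow> Least P = Least Q"
proof -
  assume p3: "P 3" and eq: "\<And>k. k \<le> 3 \<Longrightarrow> P k = Q k"
  have q3: "Q 3" using p3 eq by auto
  have a: "Least P \<le> 3" using p3 by (rule Least_le)
  have b: "Least Q \<le> 3" using q3 by (rule Least_le)
  have "Q (Least P)" using eq[OF a] LeastI[of P, OF p3] by simp
  hence "Least Q \<le> Least P" by (rule Least_le)
  moreover have "P (Least Q)" using eq[OF b] LeastI[of Q, OF q3] by simp
  hence "Least P \<le> Least Q" by (rule Least_le)
  ultimately show ?thesis by simp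
qed

lemma gdist_eq_graph:
  assumes sub: "\<And>a b. F a b \<Longrightarrow> E a b"
    and e1: "F u w \<longleftrightarrow> E u w"
    and e2: "(\<exists>z. E u z \<and> E z w) \<Longrightarrow> (\<exists>z. F u z \<and> F z w)"
    and w3: "walk_of_length F 3 u w"
  shows "gdist F u w = gdist E u w"
proof -
  have w3E: "walk_of_length E 3 u w" using walk_mono[OF w3 sub] .
  have eq: "walk_of_length F k u w = walk_of_length E k u w" if "k \<le> 3" for k
  proof -
    have "k = 0 \<or> k = 1 \<or> k = 2 \<or> k = 3" using that by auto
    then show ?thesis
    proof (elim disjE)
      assume k2: "k = 2"
      have "walk_of_length F 2 u w = walk_of_length E 2 u w"
      proof
        assume "walk_of_length F 2 u w" then show "walk_of_length E 2 u w" by (rule walk_mono) (rule sub)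
      next
        assume "walk_of_length E 2 u w"
        then have "\<exists>z. E u z \<and> E z w" by (simp only: walk2)
        then have "\<exists>z. F u z \<and> F z w" by (rule e2)
        then show "walk_of_length F 2 u w" by (simp only: walk2)
      qed
      then show ?thesis using k2 by simp
    next
      assume "k = 0" then show ?thesis by (simp only: walk0)
    next
      assume "k = 1" then show ?thesis by (simp only: walk1 e1)
    next
      assume "k = 3" then show ?thesis using w3 w3E by simp
    qed
  qed
  show ?thesis
    by (simp add: gdist_Least[OF w3] gdist_Least[OF w3E] least_eq[of "\<lambda>k. walk_of_length F k u w" "\<lambda>k. walk_of_length E k u w", OF w3 eq])
qed

lemma W1_eq:
  assumes "nbrs F x = nbrs E x" "nbrs F y = nbrs E y"
    and "\<And>u w. u \<in> nbrs E x \<Longrightarrow> w \<in> nbrs E y \<Longrightarrow> gdist F u w = gdist E u w"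
  shows "W1_nbr F x y = W1_nbr E x y"
proof -
  have ux: "unif_nbr F x = unif_nbr E x"
    using assms(1) unfolding unif_nbr_def fun_eq_iff nbrs_def by (metis mem_Collect_eq)
  have uy: "unif_nbr F y = unif_nbr E y"
    using assms(2) unfolding unif_nbr_def fun_eq_iff nbrs_def by (metis mem_Collect_eq)
  show ?thesis unfolding W1_nbr_def ux uy assms(1,2) transport_cost_def
    by (rule INF_cong[OF refl]) (intro sum.cong refl, simp add: assms(3))
qed

theorem lemma2p3:
  fixes V :: "'a set" and E :: "'a \<Rightarrow> 'a \<Rightarrow> bool" and x y :: 'a
  assumes "simple_graph V E" and "locally_finite V E" and "E x y"
  defines "Vxy \<equiv> nbrs E x \<union> nbrs E y \<union> pent_set V E x y"
  defines "EH \<equiv> induced E Vxy"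
  defines "EH' \<equiv> (\<lambda>u v. EH u v \<and>
              \<not> ((u \<in> common_nbrs E x y \<and> v \<in> pent_set V E x y) \<or>
                 (u \<in> pent_set V E x y \<and> v \<in> common_nbrs E x y)))"
  shows "ollivier_curv E x y = ollivier_curv EH x y \<and> ollivier_curv E x y = ollivier_curv EH' x y"
proof -
  have sym: "E a b \<Longrightarrow> E b a" for a b using assms(1) unfolding simple_graph_def by blast
  have irr: "\<not> E a a" for a using assms(1) unfolding simple_graph_def by blast
  have inV: "E a b \<Longrightarrow> b \<in> V" for a b using assms(1) unfolding simple_graph_def by blast
  have g0: "gdist E a a = 0" for a proof -
    have "gdist E a a = enat 0" by (rule gdist_val) (auto simp: walk0)
    then show ?thesis by (simp add: zero_enat_def)
  qed
  have g1: "gdist E a b = 1" if ab: "E a b" for a b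
  proof -
    have "a \<noteq> b" using ab irr by auto
    have "gdist E a b = enat 1"
    proof (rule gdist_val)
      show "walk_of_length E 1 a b" using ab by (simp only: walk1)
      show "\<not> walk_of_length E m a b" if "m < 1" for m
        using that \<open>a \<noteq> b\<close> by (simp add: walk0)
    qed
    then show ?thesis by (simp add: one_enat_def)
  qed
  have g2: "E a c \<Longrightarrow> E c b \<Longrightarrow> a \<noteq> b \<Longrightarrow> \<not> E a b \<Longrightarrow> gdist E a b = 2" for a b c
  proof -
    assume h: "E a c" "E c b" "a \<noteq> b" "\<not> E a b"
    have "gdist E a b = enat 2"
    proof (rule gdist_val)
      show "walk_of_length E 2 a b" using h by (auto simp only: walk2)
      show "\<not> walk_of_length E m a b" if "m < 2" for m
      proof -
        have "m = 0 \<or> m = 1" using that by auto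
        then show ?thesis using h by (auto simp only: walk0 walk1)
      qed
    qed
    then show ?thesis by (simp add: enat_numeral)
  qed
  let ?P = "pent_set V E x y"
  have notP1: "E x a \<Longrightarrow> a \<notin> ?P" for a unfolding pent_set_def using g1 by simp
  have notP2: "E y a \<Longrightarrow> a \<notin> ?P" for a unfolding pent_set_def using g1 by simp
  have xV: "x \<in> Vxy" "y \<in> Vxy" using assms(3) sym unfolding Vxy_def nbrs_def by auto
  have xP: "x \<notin> ?P" "y \<notin> ?P" unfolding pent_set_def using g0 by auto
  have NV: "nbrs E x \<subseteq> Vxy" "nbrs E y \<subseteq> Vxy" unfolding Vxy_def by auto
  have EH'_eq: "EH' a b = EH a b" if "a \<notin> ?P" "b \<notin> ?P" for a b using that unfolding EH'_def by simp
  have nH: "nbrs EH x = nbrs E x" "nbrs EH y = nbrs E y"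
    using xV NV unfolding EH_def induced_def nbrs_def by blast+
  have subH: "EH a b \<Longrightarrow> E a b" for a b unfolding EH_def induced_def by simp
  have subH': "EH' a b \<Longrightarrow> E a b" for a b unfolding EH'_def using subH by (simp only:)
  have subHH: "EH' a b \<Longrightarrow> EH a b" for a b unfolding EH'_def by blast
  have ex: "EH' x v = EH x v" for v
  proof
    assume "EH x v"
    then have "E x v" by (rule subH)
    then show "EH' x v" using EH'_eq[OF xP(1) notP1] \<open>EH x v\<close> by blast
  qed (rule subHH)
  have ey: "EH' y v = EH y v" for v
  proof
    assume "EH y v"
    then have "E y v" by (rule subH)
    then show "EH' y v" using EH'_eq[OF xP(2) notP2] \<open>EH y v\<close> by blast
  qed (rule subHH)
  have nH': "nbrs EH' x = nbrs E x" "nbrs EH' y = nbrs E y"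
  proof -
    have "EH' x = EH x" by (rule ext) (rule ex)
    moreover have "EH' y = EH y" by (rule ext) (rule ey)
    ultimately show "nbrs EH' x = nbrs E x" "nbrs EH' y = nbrs E y" using nH unfolding nbrs_def by simp_all
  qed
  have dist: "gdist EH u w = gdist E u w \<and> gdist EH' u w = gdist E u w"
    if u: "u \<in> nbrs E x" and w: "w \<in> nbrs E y" for u w
  proof -
    have Eu: "E x u" and Ew: "E y w" using u w unfolding nbrs_def by auto
    have uV: "u \<in> Vxy" and wV: "w \<in> Vxy" using u w NV by auto
    have uP: "u \<notin> ?P" and wP: "w \<notin> ?P" using notP1[OF Eu] notP2[OF Ew] .
    have Hedge: "a \<in> Vxy \<Longrightarrow> b \<in> Vxy \<Longrightarrow> EH a b = E a b" for a b
      unfolding EH_def induced_def by auto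
    have H'edge: "a \<in> Vxy \<Longrightarrow> b \<in> Vxy \<Longrightarrow> a \<notin> ?P \<Longrightarrow> b \<notin> ?P \<Longrightarrow> EH' a b = E a b" for a b
      using EH'_eq Hedge by auto
    have mid: "z \<in> Vxy" if "E u z" "E z w" for z
    proof (cases "E x z \<or> E y z")
      case True then show ?thesis unfolding Vxy_def nbrs_def by auto
    next
      case False
      have "z \<noteq> x" "z \<noteq> y" using False assms(3) sym by auto
      then have "gdist E x z = 2" "gdist E y z = 2"
        using g2[OF Eu that(1)] g2[OF Ew sym[OF that(2)]] False by auto
      moreover have "z \<in> V" using inV[OF that(1)] .
      ultimately show ?thesis unfolding Vxy_def pent_set_def by auto
    qed
    have w3: "walk_of_length EH 3 u w" "walk_of_length EH' 3 u w"
      using walk3[of EH u x y w] walk3[of EH' u x y w] Hedge H'edge uV wV xV uP wP xP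
        sym[OF Eu] assms(3) Ew by auto
    have d1: "gdist EH u w = gdist E u w"
    proof (rule gdist_eq_graph[OF subH])
      show "EH u w = E u w" using Hedge uV wV by simp
      show "\<exists>z. EH u z \<and> EH z w" if "\<exists>z. E u z \<and> E z w"
        using that mid Hedge uV wV by blast
    qed (use w3 in auto)
    have d2: "gdist EH' u w = gdist E u w"
    proof (rule gdist_eq_graph[OF subH'])
      show "EH' u w = E u w" using H'edge uV wV uP wP by simp
      show "\<exists>z. EH' u z \<and> EH' z w" if "\<exists>z. E u z \<and> E z w"
      proof -
        obtain z where z: "E u z" "E z w" using \<open>\<exists>z. E u z \<and> E z w\<close> by blast
        have zV: "z \<in> Vxy" using mid z by blast
        show ?thesis
        proof (cases "z \<in> ?P")
          case False then show ?thesis using z zV H'edge uV wV uP wP by blast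
        next
          case True
          show ?thesis
          proof (cases "u \<in> common_nbrs E x y")
            case True
            then have "E u y" using sym unfolding common_nbrs_def nbrs_def by auto
            then show ?thesis using Ew H'edge uV wV uP wP xV xP by blast
          next
            case uc: False
            show ?thesis
            proof (cases "w \<in> common_nbrs E x y")
              case True
              then have "E x w" unfolding common_nbrs_def nbrs_def by auto
              then show ?thesis using sym[OF Eu] H'edge uV wV uP wP xV xP by blast
            next
              case False
              then show ?thesis using uc z zV uV wV uP wP unfolding EH'_def EH_def induced_def
                by blast
            qed
          qed
        qed
      qed
    qed (use w3 in auto)
    show ?thesis using d1 d2 by simp
  qed
  have "W1_nbr EH x y = W1_nbr E x y" by (rule W1_eq[OF nH]) (use dist in auto)
  moreover have "W1_nbr EH' x y = W1_nbr E x y" by (rule W1_eq[OF nH']) (use dist in auto)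
  ultimately show ?thesis unfolding ollivier_curv_def by simp
qed

end
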